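(* Let $d\ge4$ be an integer and $\Gamma=\mathbb{Z}_2^d$. Then $\Gamma$ is not $(D(\Gamma)-1)$-close.
   Context: For a finite abelian group $\Gamma$, its Davenport constant $D(\Gamma)$ is the minimum integer $\ell$ such that every sequence of $\ell$ elements of $\Gamma$ has a nonempty subsequence summing to $0$. For an integer $k\ge1$, a finite abelian group $\Gamma$ is $k$-close if for every matroid $M$, every labeling $\psi\colon E(M)\to\Gamma$, every $g\in\Gamma$ and every basis $B$ of $M$, if $M$ has a basis with label $g$ then it has a basis $B^*$ with $\psi(B^* )=g$ and $|B\setminus B^*|\le k$, where $\psi(S):=\sum_{x\in S}\psi(x)$. *)

theory Defs
  imports "HOL-Algebra.Algebra"
begin

definition matroid_bases :: "'e set \<Rightarrow> 'e set set \<Rightarrow> bool" where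
  "matroid_bases E \<B> \<longleftrightarrow> finite E \<and> \<B> \<noteq> {} \<and> (\<forall>B\<in>\<B>. B \<subseteq> E) \<and>
     (\<forall>B1\<in>\<B>. \<forall>B2\<in>\<B>. \<forall>x\<in>B1 - B2. \<exists>y\<in>B2 - B1. insert y (B1 - {x}) \<in> \<B>)"

definition davenport :: "('a, 'b) monoid_scheme \<Rightarrow> nat" where
  "davenport G = (LEAST l. \<forall>s. (\<forall>i<l. s i \<in> carrier G) \<longrightarrow>
      (\<exists>I. I \<subseteq> {..<l} \<and> I \<noteq> {} \<and> finprod G s I = \<one>\<^bsub>G\<^esub>))"

text \<open>k-closeness. Matroids are taken with ground sets of natural numbers
  (every finite matroid is isomorphic to one of these).\<close>
definition k_close :: "('a, 'b) monoid_scheme \<Rightarrow> nat \<Rightarrow> bool" where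
  "k_close G k \<longleftrightarrow> (\<forall>(E::nat set) \<B> \<psi> g B.
      matroid_bases E \<B> \<longrightarrow> \<psi> \<in> E \<rightarrow> carrier G \<longrightarrow> g \<in> carrier G \<longrightarrow> B \<in> \<B> \<longrightarrow>
      (\<exists>B'\<in>\<B>. finprod G \<psi> B' = g) \<longrightarrow>
      (\<exists>B'\<in>\<B>. finprod G \<psi> B' = g \<and> card (B - B') \<le> k))"

definition Z2pow :: "nat \<Rightarrow> (nat \<Rightarrow> int) monoid" where
  "Z2pow d = product_group {..<d} (\<lambda>_. integer_mod_group 2)"

end

theory Submission
  imports Defs
begin


lemma Z2_carrier: "carrier (Z2pow d) = (\<Pi>\<^sub>E i\<in>{..<d}. {0..<2::int})"
  by (simp add: Z2pow_def carrier_integer_mod_group)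

lemma Z2_group: "group (Z2pow d)"
  unfolding Z2pow_def by (rule product_group) simp

lemma Z2_comm_group: "comm_group (Z2pow d)"
proof -
  interpret group "Z2pow d" by (rule Z2_group)
  show ?thesis
    by unfold_locales (auto simp: Z2pow_def add.commute)
qed

lemma Z2_sq: "x \<in> carrier (Z2pow d) \<Longrightarrow> x \<otimes>\<^bsub>Z2pow d\<^esub> x = \<one>\<^bsub>Z2pow d\<^esub>"
  by (auto simp: Z2pow_def carrier_integer_mod_group PiE_iff intro!: ext)

lemma Z2_card: "card (carrier (Z2pow d)) = 2 ^ d"
  by (simp add: Z2_carrier card_PiE)

lemma Z2_finite: "finite (carrier (Z2pow d))"
  by (simp add: Z2_carrier finite_PiE)



context comm_group
begin

lemma dav_prop:
  assumes fin: "finite (carrier G)" and lt: "card (carrier G) < 2 ^ n"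
    and sq: "\<And>x. x \<in> carrier G \<Longrightarrow> x \<otimes> x = \<one>"
    and s: "\<forall>i<n. s i \<in> carrier G"
  shows "\<exists>I. I \<subseteq> {..<n} \<and> I \<noteq> {} \<and> finprod G s I = \<one>"
proof -
  let ?F = "Pow {..<n}"
  let ?f = "\<lambda>I. finprod G s I"
  have sP: "\<And>I. I \<subseteq> {..<n} \<Longrightarrow> s \<in> I \<rightarrow> carrier G" using s by auto
  have "\<not> inj_on ?f ?F"
  proof
    assume "inj_on ?f ?F"
    moreover have "?f ` ?F \<subseteq> carrier G" using sP by auto
    ultimately have "card ?F \<le> card (carrier G)" using fin card_inj_on_le by blast
    moreover have "card ?F = 2 ^ n" by (simp add: card_Pow)
    ultimately show False using lt by simp
  qed
  then obtain I J where IJ: "I \<subseteq> {..<n}" "J \<subseteq> {..<n}" "I \<noteq> J" "?f I = ?f J"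
    unfolding inj_on_def by auto
  have fI: "finite I" "finite J" using IJ finite_subset by auto
  define a where "a = finprod G s (I - J)"
  define b where "b = finprod G s (J - I)"
  define c where "c = finprod G s (I \<inter> J)"
  have sc: "s \<in> I - J \<rightarrow> carrier G" "s \<in> J - I \<rightarrow> carrier G" "s \<in> I \<inter> J \<rightarrow> carrier G"
    using sP IJ by auto
  have abc: "a \<in> carrier G" "b \<in> carrier G" "c \<in> carrier G"
    unfolding a_def b_def c_def using sc by auto
  have eI: "?f I = a \<otimes> c"
  proof -
    have "I = (I - J) \<union> (I \<inter> J)" by auto
    then have "?f I = finprod G s ((I - J) \<union> (I \<inter> J))" by simp
    also have "\<dots> = a \<otimes> c" unfolding a_def c_def
      by (rule finprod_Un_disjoint) (use fI sc in auto)
    finally show ?thesis .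
  qed
  have eJ: "?f J = b \<otimes> c"
  proof -
    have "J = (J - I) \<union> (I \<inter> J)" by auto
    then have "?f J = finprod G s ((J - I) \<union> (I \<inter> J))" by simp
    also have "\<dots> = b \<otimes> c" unfolding b_def c_def
      by (rule finprod_Un_disjoint) (use fI sc in auto)
    finally show ?thesis .
  qed
  have "a = b" using eI eJ IJ(4) abc r_cancel by metis
  have "finprod G s ((I - J) \<union> (J - I)) = a \<otimes> b" unfolding a_def b_def
    by (rule finprod_Un_disjoint) (use fI sc in auto)
  also have "\<dots> = \<one>" using \<open>a = b\<close> sq abc by simp
  finally show ?thesis
    by (rule_tac x="(I - J) \<union> (J - I)" in exI) (use IJ in auto)
qed

lemma dav_le:
  assumes fin: "finite (carrier G)" and lt: "card (carrier G) < 2 ^ n"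
    and sq: "\<And>x. x \<in> carrier G \<Longrightarrow> x \<otimes> x = \<one>"
  shows "davenport G \<le> n"
  unfolding davenport_def
  by (rule Least_le) (use dav_prop[OF fin lt sq] in blast)

end


context comm_group
begin

lemma not_close:
  assumes inj: "inj_on \<psi> {..<2*n}" and psi: "\<psi> \<in> {..<2*n} \<rightarrow> carrier G"
    and ne: "finprod G \<psi> {..<n} \<noteq> finprod G \<psi> {n..<2*n}" and kn: "k < n"
  shows "\<not> k_close G k"
proof
  assume kc: "k_close G k"
  define E where "E = {..<2*n}"
  define Bp where "Bp = {n..<2*n}"
  define g where "g = finprod G \<psi> Bp"
  define BB where "BB = {T. T \<subseteq> E \<and> card T = n \<and> (finprod G \<psi> T \<noteq> g \<or> T = Bp)}"
  have BpB: "Bp \<in> BB" unfolding BB_def Bp_def E_def by auto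
  have B0: "{..<n} \<in> BB" unfolding BB_def E_def using ne by (auto simp: g_def Bp_def)
  have gc: "g \<in> carrier G" unfolding g_def Bp_def by (rule finprod_closed) (use psi in auto)
  have mat: "matroid_bases E BB"
    unfolding matroid_bases_def
  proof (intro conjI ballI)
    show "finite E" by (simp add: E_def)
    show "BB \<noteq> {}" using BpB by auto
    show "B \<subseteq> E" if "B \<in> BB" for B using that by (auto simp: BB_def)
  next
    fix B1 B2 x assume B1: "B1 \<in> BB" and B2: "B2 \<in> BB" and x: "x \<in> B1 - B2"
    have sub: "B1 \<subseteq> E" "B2 \<subseteq> E" and cd: "card B1 = n" "card B2 = n"
      using B1 B2 by (auto simp: BB_def)
    have fin: "finite B1" "finite B2" using sub by (auto simp: E_def finite_subset)
    have cY: "card (B2 - B1) = card (B1 - B2)"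
      using fin cd by (simp add: card_Diff_subset_Int Int_commute)
    have "B1 \<noteq> {}" using x by blast
    then have n1: "n \<ge> 1" using fin cd by (metis card_0_eq less_one not_le)
    show "\<exists>y\<in>B2 - B1. insert y (B1 - {x}) \<in> BB"
    proof (rule ccontr)
      assume H: "\<not> ?thesis"
      define c where "c = finprod G \<psi> (B1 - {x})"
      have psiE: "\<psi> \<in> E \<rightarrow> carrier G" using psi by (simp add: E_def)
      have cc: "c \<in> carrier G" unfolding c_def by (rule finprod_closed) (use psiE sub in blast)
      have lab: "finprod G \<psi> (insert y (B1 - {x})) = g" and Ty: "insert y (B1 - {x}) \<noteq> Bp"
        if y: "y \<in> B2 - B1" for y
      proof -
        have "insert y (B1 - {x}) \<subseteq> E" using sub y x by auto
        moreover have "card (insert y (B1 - {x})) = n"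
          using fin y x cd n1 by (simp add: card_insert_if)
        moreover have "insert y (B1 - {x}) \<notin> BB" using H y by blast
        ultimately show "finprod G \<psi> (insert y (B1 - {x})) = g" "insert y (B1 - {x}) \<noteq> Bp"
          unfolding BB_def by auto
      qed
      have lab2: "\<psi> y \<otimes> c = g" if y: "y \<in> B2 - B1" for y
      proof -
        have "finprod G \<psi> (insert y (B1 - {x})) = \<psi> y \<otimes> c"
          unfolding c_def
          by (rule finprod_insert) (use fin y sub psiE in auto)
        then show ?thesis using lab[OF y] by simp
      qed
      have uniq: "y1 = y2" if "y1 \<in> B2 - B1" "y2 \<in> B2 - B1" for y1 y2
      proof -
        have "\<psi> y1 \<otimes> c = \<psi> y2 \<otimes> c" using lab2 that by simp
        moreover have "\<psi> y1 \<in> carrier G" "\<psi> y2 \<in> carrier G" using psiE sub that by auto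
        ultimately have "\<psi> y1 = \<psi> y2" using r_cancel cc by blast
        moreover have "y1 \<in> {..<2*n}" "y2 \<in> {..<2*n}" using that sub by (auto simp: E_def)
        ultimately show ?thesis using inj by (simp add: inj_on_eq_iff)
      qed
      have "B1 - B2 \<noteq> {}" using x by blast
      then have "card (B1 - B2) \<noteq> 0" using fin by simp
      then have "B2 - B1 \<noteq> {}" using cY fin by (metis card.empty)
      then obtain y where y: "y \<in> B2 - B1" by blast
      have Yy: "B2 - B1 = {y}" using uniq y by auto
      have "card (B1 - B2) = 1" using cY Yy by simp
      then have Xx: "B1 - B2 = {x}" using x by (metis card_1_singletonE singletonD)
      have "B2 = insert y (B1 - {x})" using Xx Yy by blast
      then show False using Ty[OF y] lab[OF y] B2 unfolding BB_def by auto
    qed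
  qed
  have "\<exists>B'\<in>BB. finprod G \<psi> B' = g \<and> card ({..<n} - B') \<le> k"
  proof (rule kc[unfolded k_close_def, rule_format, of E BB \<psi> g "{..<n}"])
    show "matroid_bases E BB" by (rule mat)
    show "\<psi> \<in> E \<rightarrow> carrier G" using psi by (simp add: E_def)
    show "g \<in> carrier G" by (rule gc)
    show "{..<n} \<in> BB" by (rule B0)
    show "\<exists>B'\<in>BB. finprod G \<psi> B' = g" using BpB by (auto simp: g_def)
  qed
  then obtain B' where "B' \<in> BB" "finprod G \<psi> B' = g" "card ({..<n} - B') \<le> k" by blast
  then have "B' = Bp" unfolding BB_def by auto
  then have "{..<n} - B' = {..<n}" by (auto simp: Bp_def)
  then show False using \<open>card ({..<n} - B') \<le> k\<close> kn by simp
qed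

end


lemma pow_bound: "d \<ge> 4 \<Longrightarrow> 2 * d + 2 < (2::nat) ^ d"
proof (induction d rule: dec_induct)
  case base then show ?case by simp
next
  case (step m) then show ?case by simp
qed

theorem theorem6p13:
  fixes d :: nat
  assumes "d \<ge> 4"
  shows "\<not> k_close (Z2pow d) (davenport (Z2pow d) - 1)"
proof -
  let ?G = "Z2pow d"
  interpret comm_group ?G by (rule Z2_comm_group)
  define n where "n = d + 1"
  have dle: "davenport ?G \<le> n" unfolding n_def
    by (rule dav_le) (use Z2_finite Z2_card Z2_sq in auto)
  have big: "2 * n < 2 ^ d" using pow_bound[OF assms] by (simp add: n_def)
  obtain h where h: "bij_betw h {0..<(2::nat)^d} (carrier ?G)"
    using ex_bij_betw_nat_finite[OF Z2_finite[of d]] Z2_card[of d] by auto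
  have hinj: "inj_on h {0..<(2::nat)^d}" and hc: "\<And>i. i < (2::nat)^d \<Longrightarrow> h i \<in> carrier ?G"
    using h by (auto simp: bij_betw_def)
  define \<psi> where "\<psi> c = (\<lambda>i. if i = 0 then h c else h i)" for c
  have psiC: "\<psi> c \<in> {..<2*n} \<rightarrow> carrier ?G" if "c \<le> 2*n" for c
    using that big hc unfolding \<psi>_def by auto
  have psiI: "inj_on (\<psi> c) {..<2*n}" if "c = 0 \<or> c = 2*n" for c
  proof (rule inj_onI)
    fix i j assume ij: "i \<in> {..<2*n}" "j \<in> {..<2*n}" "\<psi> c i = \<psi> c j"
    have ci: "c < 2^d" using that big by auto
    have hi: "\<And>a b. a < 2^d \<Longrightarrow> b < 2^d \<Longrightarrow> h a = h b \<Longrightarrow> a = b"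
      using hinj by (auto simp: inj_on_def)
    have ib: "i < 2^d" "j < 2^d" "i < 2*n" "j < 2*n" using ij big by auto
    show "i = j"
    proof (cases "i = 0")
      case True
      show ?thesis
      proof (cases "j = 0")
        case False
        then have "h c = h j" using ij(3) \<open>i = 0\<close> by (simp add: \<psi>_def)
        then have "c = j" using hi ci ib by blast
        then show ?thesis using that False ib by auto
      qed (use True in simp)
    next
      case False
      show ?thesis
      proof (cases "j = 0")
        case True
        then have "h i = h c" using ij(3) \<open>i \<noteq> 0\<close> by (simp add: \<psi>_def)
        then have "c = i" using hi ci ib by metis
        then show ?thesis using that False ib by auto
      next
        case False
        then have "h i = h j" using ij(3) \<open>i \<noteq> 0\<close> by (simp add: \<psi>_def)
        then show ?thesis using hi ib by blast
      qed
    qed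
  qed
  have n1: "n \<ge> 1" by (simp add: n_def)
  have top: "finprod ?G (\<psi> c) {n..<2*n} = finprod ?G h {n..<2*n}" for c
    by (rule finprod_cong') (use n1 big hc in \<open>auto simp: \<psi>_def\<close>)
  define r where "r = finprod ?G h ({..<n} - {0})"
  have rc: "r \<in> carrier ?G" unfolding r_def by (rule finprod_closed) (use big hc in auto)
  have bot: "finprod ?G (\<psi> c) {..<n} = h c \<otimes>\<^bsub>?G\<^esub> r" if "c \<le> 2*n" for c
  proof -
    have e: "{..<n} = insert 0 ({..<n} - {0})" using n1 by auto
    have "finprod ?G (\<psi> c) {..<n} = finprod ?G (\<psi> c) (insert 0 ({..<n} - {0}))"
      using e by simp
    also have "\<dots> = \<psi> c 0 \<otimes>\<^bsub>?G\<^esub> finprod ?G (\<psi> c) ({..<n} - {0})"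
      by (rule finprod_insert) (use psiC[OF that] n1 in \<open>auto simp: Pi_iff\<close>)
    also have "finprod ?G (\<psi> c) ({..<n} - {0}) = r"
      unfolding r_def by (rule finprod_cong') (use big hc in \<open>auto simp: \<psi>_def\<close>)
    finally show ?thesis by (simp add: \<psi>_def)
  qed
  obtain c where c: "c = 0 \<or> c = 2*n"
    and ne: "finprod ?G (\<psi> c) {..<n} \<noteq> finprod ?G (\<psi> c) {n..<2*n}"
  proof (cases "finprod ?G (\<psi> 0) {..<n} = finprod ?G (\<psi> 0) {n..<2*n}")
    case True
    have "finprod ?G (\<psi> (2*n)) {..<n} \<noteq> finprod ?G (\<psi> (2*n)) {n..<2*n}"
    proof
      assume eq: "finprod ?G (\<psi> (2*n)) {..<n} = finprod ?G (\<psi> (2*n)) {n..<2*n}"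
      have "h 0 \<otimes>\<^bsub>?G\<^esub> r = h (2*n) \<otimes>\<^bsub>?G\<^esub> r"
        using True eq bot[of 0] bot[of "2*n"] top by simp
      moreover have "h 0 \<in> carrier ?G" "h (2*n) \<in> carrier ?G" using hc big by auto
      ultimately have "h 0 = h (2*n)" using r_cancel rc by blast
      then have "0 = 2*n" using hinj big unfolding inj_on_def by auto
      then show False using n1 by simp
    qed
    then show ?thesis using that by blast
  next
    case False then show ?thesis using that by blast
  qed
  have kn: "davenport ?G - 1 < n" using dle n1 by linarith
  show ?thesis
    by (rule not_close[OF psiI[OF c] psiC ne kn]) (use c in auto)
qed


end
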